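(* Let $A$ be an infinite set, $\mathcal{L}\in V(\Omega(A))$, $I,J$ sets, $f:A^{I}\to A^{J}$ a uniformly continuous map, $\alpha:I\to\mathcal{L}$, $\beta:J\to\mathcal{L}$, and suppose $\beta=\overline{f}^{\mathcal{L}}(\alpha)$. Then (1) $\phi_{\beta}=\phi_{\alpha}\circ f^{\star}$; and (2) for every $R\in\{\emptyset\}\cup\bigcup\mathcal{P}(A,J)$, we have $R\in Z_{\beta}$ if and only if $f^{-1}(R)\in Z_{\alpha}$.
   Context: For each $a\in A$ let $\hat{a}$ be a constant symbol, and for each $n\geq1$ and each $h:A^{n}\to A$ let $\hat{h}$ be an $n$-ary operation symbol. $\Omega(A)$ is the algebra with universe $A$ interpreting $\hat{a}$ as $a$ and $\hat{h}$ as $h$; $V(\Omega(A))$ is the variety it generates. For $h:X\to Y$, $\Pi(h)$ is the partition of $X$ into nonempty fibers; for a partition $P$ of $Y$, $[h]_{-1}(P)=\{h^{-1}(R):R\in P\}\setminus\{\emptyset\}$. For $i_{1},\dots,i_{n}\in I$, $\mathcal{P}_{i_{1},\dots,i_{n}}$ is the partition of $A^{I}$ with $u,v$ in the same block iff $u(i_{k})=v(i_{k})$ for all $k$; $\mathcal{P}(A,I)$ is the filter of partitions of $A^{I}$ coarser than some $\mathcal{P}_{i_{1},\dots,i_{n}}$; $\bigcup\mathcal{P}(A,I)$ is the set of all blocks of partitions in it, and $\{\emptyset\}\cup\bigcup\mathcal{P}(A,I)$ is a Boolean algebra of subsets of $A^{I}$. $\mathbf{F}(A,I)=\{h\in A^{A^{I}}:\Pi(h)\in\mathcal{P}(A,I)\}$,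 a subalgebra of $\Omega(A)^{A^{I}}$, freely generated in $V(\Omega(A))$ by the projections $\pi_{i}(u)=u(i)$; each $h\in\mathbf{F}(A,I)$ has the form $\hat{r}^{\mathbf{F}(A,I)}(\pi_{i_{1}},\dots,\pi_{i_{n}})$. A map $h:A^{I}\to A^{J}$ is uniformly continuous if $[h]_{-1}(P)\in\mathcal{P}(A,I)$ for all $P\in\mathcal{P}(A,J)$; then each $\pi_{j}\circ h\in\mathbf{F}(A,I)$. For $h=\hat{r}^{\mathbf{F}(A,I)}(\pi_{i_{1}},\dots,\pi_{i_{n}})$, $\overline{h}^{\mathcal{L}}((\ell_{i})_{i\in I})=\hat{r}^{\mathcal{L}}(\ell_{i_{1}},\dots,\ell_{i_{n}})$ (well defined), and for uniformly continuous $f:A^{I}\to A^{J}$, $\overline{f}^{\mathcal{L}}(\alpha)=(\overline{\pi_{j}\circ f}^{\mathcal{L}}(\alpha))_{j\in J}\in\mathcal{L}^{J}$ for $\alpha\in\mathcal{L}^{I}$. For $\alpha:I\to\mathcal{L}$, $\phi_{\alpha}:\mathbf{F}(A,I)\to\mathcal{L}$ is the unique homomorphism with $\phi_{\alpha}(\pi_{i})=\alpha(i)$, and $Z_{\alpha}$ is the filter on $\{\emptyset\}\cup\bigcup\mathcal{P}(A,I)$ such that for $\ell,m\in\mathbf{F}(A,I)$, $\phi_{\alpha}(\ell)=\phi_{\alpha}(m)$ iff $\{u\in A^{I}:\ell(u)=m(u)\}\in Z_{\alpha}$ (so $\mathbf{F}(A,I)/Z_{\alpha}$ is the quotient by $\ker\phi_{\alpha}$);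 $\phi_{\beta},Z_{\beta}$ are defined analogously for $J$. For uniformly continuous $f:A^{I}\to A^{J}$, $f^{\star}:\mathbf{F}(A,J)\to\mathbf{F}(A,I)$ is $f^{\star}(g)=g\circ f$. *)

theory Defs
  imports "HOL-Library.Disjoint_Sets"
begin

text \<open>An n-ary operation on A is represented as a
function on lists, only ever applied to lists of length n.\<close>

datatype 'a sym = Cst 'a | Op nat "'a list \<Rightarrow> 'a"

fun arity :: "'a sym \<Rightarrow> nat" where
  "arity (Cst a) = 0"
| "arity (Op n h) = n"

fun valid_sym :: "'a sym \<Rightarrow> bool" where
  "valid_sym (Cst a) = True"
| "valid_sym (Op n h) = (n \<ge> 1)"

fun omega :: "'a sym \<Rightarrow> 'a list \<Rightarrow> 'a" where
  "omega (Cst a) xs = a"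
| "omega (Op n h) xs = h xs"

datatype 'a trm = Var nat | Ap "'a sym" "'a trm list"

fun wf_trm :: "'a trm \<Rightarrow> bool" where
  "wf_trm (Var n) = True"
| "wf_trm (Ap s ts) = (valid_sym s \<and> length ts = arity s \<and> (\<forall>t\<in>set ts. wf_trm t))"

fun eval_trm :: "('a sym \<Rightarrow> 'l list \<Rightarrow> 'l) \<Rightarrow> (nat \<Rightarrow> 'l) \<Rightarrow> 'a trm \<Rightarrow> 'l" where
  "eval_trm op \<rho> (Var n) = \<rho> n"
| "eval_trm op \<rho> (Ap s ts) = op s (map (eval_trm op \<rho>) ts)"

definition is_algebra :: "'l set \<Rightarrow> ('a sym \<Rightarrow> 'l list \<Rightarrow> 'l) \<Rightarrow> bool" where
  "is_algebra Lc opL \<longleftrightarrow>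
     (\<forall>s xs. valid_sym s \<and> length xs = arity s \<and> set xs \<subseteq> Lc \<longrightarrow> opL s xs \<in> Lc)"

text \<open>Membership in the variety generated by \<Omega>(A): by Birkhoff's theorem, the
algebras satisfying every identity valid in \<Omega>(A).\<close>
definition in_V_Omega :: "'l set \<Rightarrow> ('a sym \<Rightarrow> 'l list \<Rightarrow> 'l) \<Rightarrow> bool" where
  "in_V_Omega Lc opL \<longleftrightarrow> is_algebra Lc opL \<and>
     (\<forall>s t. wf_trm s \<and> wf_trm t \<and> (\<forall>\<rho>::nat \<Rightarrow> 'a. eval_trm omega \<rho> s = eval_trm omega \<rho> t)
        \<longrightarrow> (\<forall>\<rho>. range \<rho> \<subseteq> Lc \<longrightarrow> eval_trm opL \<rho> s = eval_trm opL \<rho> t))"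

definition Pfin :: "'i set \<Rightarrow> ('i \<Rightarrow> 'a) set set" where
  "Pfin S = {{v. \<forall>i\<in>S. v i = u i} | u. True}"

definition coarser :: "'b set set \<Rightarrow> 'b set set \<Rightarrow> bool" where
  "coarser P Q \<longleftrightarrow> (\<forall>B\<in>Q. \<exists>C\<in>P. B \<subseteq> C)"

definition Pset :: "('i \<Rightarrow> 'a) set set set" where
  "Pset = {P. partition_on UNIV P \<and> (\<exists>S. finite S \<and> coarser P (Pfin S))}"

definition fibers :: "('b \<Rightarrow> 'c) \<Rightarrow> 'b set set" where
  "fibers h = {h -` {y} | y. y \<in> range h}"

definition preimg_part :: "('b \<Rightarrow> 'c) \<Rightarrow> 'c set set \<Rightarrow> 'b set set" where
  "preimg_part h P = (\<lambda>R. h -` R) ` P - {{}}"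

definition Bool_alg :: "('i \<Rightarrow> 'a) set set" where
  "Bool_alg = insert {} (\<Union> Pset)"

definition unif_cont :: "(('i \<Rightarrow> 'a) \<Rightarrow> ('j \<Rightarrow> 'a)) \<Rightarrow> bool" where
  "unif_cont f \<longleftrightarrow> (\<forall>P\<in>(Pset :: ('j \<Rightarrow> 'a) set set set). preimg_part f P \<in> Pset)"

definition Fset :: "(('i \<Rightarrow> 'a) \<Rightarrow> 'a) set" where
  "Fset = {h. fibers h \<in> Pset}"

definition proj :: "'i \<Rightarrow> ('i \<Rightarrow> 'a) \<Rightarrow> 'a" where
  "proj i = (\<lambda>u. u i)"

text \<open>Operations of F(A,I) as a subalgebra of \<Omega>(A)^(A^I).\<close>
definition Fop :: "'a sym \<Rightarrow> (('i \<Rightarrow> 'a) \<Rightarrow> 'a) list \<Rightarrow> ('i \<Rightarrow> 'a) \<Rightarrow> 'a" where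
  "Fop s gs = (\<lambda>u. omega s (map (\<lambda>g. g u) gs))"

definition is_hom_F :: "'l set \<Rightarrow> ('a sym \<Rightarrow> 'l list \<Rightarrow> 'l)
    \<Rightarrow> ((('i \<Rightarrow> 'a) \<Rightarrow> 'a) \<Rightarrow> 'l) \<Rightarrow> bool" where
  "is_hom_F Lc opL \<phi> \<longleftrightarrow> (\<forall>g\<in>Fset. \<phi> g \<in> Lc) \<and>
     (\<forall>s gs. valid_sym s \<and> length gs = arity s \<and> set gs \<subseteq> Fset
        \<longrightarrow> \<phi> (Fop s gs) = opL s (map \<phi> gs))"

text \<open>\<phi>_\<alpha>: the unique homomorphism F(A,I) \<rightarrow> L with \<phi>_\<alpha>(\<pi>_i) = \<alpha>(i)
(made unique as a HOL function by requiring it to be undefined off F(A,I)).\<close>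
definition phi :: "'l set \<Rightarrow> ('a sym \<Rightarrow> 'l list \<Rightarrow> 'l) \<Rightarrow> ('i \<Rightarrow> 'l)
    \<Rightarrow> (('i \<Rightarrow> 'a) \<Rightarrow> 'a) \<Rightarrow> 'l" where
  "phi Lc opL \<alpha> = (THE \<phi>. is_hom_F Lc opL \<phi> \<and> (\<forall>i. \<phi> (proj i) = \<alpha> i)
                        \<and> \<phi> \<in> extensional Fset)"

definition is_filter_on :: "'b set set \<Rightarrow> 'b set set \<Rightarrow> bool" where
  "is_filter_on B Z \<longleftrightarrow> Z \<subseteq> B \<and> UNIV \<in> Z \<and>
     (\<forall>R\<in>Z. \<forall>S\<in>Z. R \<inter> S \<in> Z) \<and> (\<forall>R\<in>Z. \<forall>S\<in>B. R \<subseteq> S \<longrightarrow> S \<in> Z)"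

definition Zf :: "'l set \<Rightarrow> ('a sym \<Rightarrow> 'l list \<Rightarrow> 'l) \<Rightarrow> ('i \<Rightarrow> 'l) \<Rightarrow> ('i \<Rightarrow> 'a) set set" where
  "Zf Lc opL \<alpha> = (THE Z. is_filter_on Bool_alg Z \<and>
      (\<forall>l\<in>Fset. \<forall>m\<in>Fset. phi Lc opL \<alpha> l = phi Lc opL \<alpha> m \<longleftrightarrow> {u. l u = m u} \<in> Z))"

definition hbar :: "('a sym \<Rightarrow> 'l list \<Rightarrow> 'l) \<Rightarrow> (('i \<Rightarrow> 'a) \<Rightarrow> 'a) \<Rightarrow> ('i \<Rightarrow> 'l) \<Rightarrow> 'l" where
  "hbar opL h lv = (SOME v. \<exists>s ix. valid_sym s \<and> length ix = arity s \<and>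
       h = Fop s (map proj ix) \<and> v = opL s (map lv ix))"

definition fbar :: "('a sym \<Rightarrow> 'l list \<Rightarrow> 'l) \<Rightarrow> (('i \<Rightarrow> 'a) \<Rightarrow> ('j \<Rightarrow> 'a)) \<Rightarrow> ('i \<Rightarrow> 'l) \<Rightarrow> 'j \<Rightarrow> 'l" where
  "fbar opL f \<alpha> = (\<lambda>j. hbar opL (\<lambda>u. f u j) \<alpha>)"

definition fstar :: "(('i \<Rightarrow> 'a) \<Rightarrow> ('j \<Rightarrow> 'a)) \<Rightarrow> (('j \<Rightarrow> 'a) \<Rightarrow> 'a) \<Rightarrow> ('i \<Rightarrow> 'a) \<Rightarrow> 'a" where
  "fstar f g = g \<circ> f"

end

theory Submission imports Defs begin

datatype ('a,'i) itrm = IVar 'i | IAp "'a sym" "('a,'i) itrm list"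

fun ieval :: "('a sym \<Rightarrow> 'l list \<Rightarrow> 'l) \<Rightarrow> ('i \<Rightarrow> 'l) \<Rightarrow> ('a,'i) itrm \<Rightarrow> 'l" where
  "ieval op \<rho> (IVar i) = \<rho> i"
| "ieval op \<rho> (IAp s ts) = op s (map (ieval op \<rho>) ts)"

fun iwf :: "('a,'i) itrm \<Rightarrow> bool" where
  "iwf (IVar i) = True"
| "iwf (IAp s ts) = (valid_sym s \<and> length ts = arity s \<and> (\<forall>t\<in>set ts. iwf t))"

fun ivars :: "('a,'i) itrm \<Rightarrow> 'i set" where
  "ivars (IVar i) = {i}"
| "ivars (IAp s ts) = (\<Union>t\<in>set ts. ivars t)"

fun tr :: "('i \<Rightarrow> nat) \<Rightarrow> ('a,'i) itrm \<Rightarrow> 'a trm" where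
  "tr c (IVar i) = Var (c i)"
| "tr c (IAp s ts) = Ap s (map (tr c) ts)"

lemma eval_tr: "eval_trm op \<rho> (tr c t) = ieval op (\<rho> \<circ> c) t"
  by (induct t) (simp_all cong: map_cong)

lemma wf_tr: "iwf t \<Longrightarrow> wf_trm (tr c t)"
  by (induct t) auto

lemma ieval_cong: "(\<forall>i\<in>ivars t. \<rho> i = \<rho>' i) \<Longrightarrow> ieval op \<rho> t = ieval op \<rho>' t"
  by (induct t) (simp_all cong: map_cong)

lemma finite_ivars: "finite (ivars t)"
  by (induct t) auto

lemma ieval_in:
  assumes "is_algebra Lc opL" "\<forall>i. \<rho> i \<in> Lc"
  shows "iwf t \<Longrightarrow> ieval opL \<rho> t \<in> Lc"
proof (induct t)
  case (IVar x) then show ?case using assms by simp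
next
  case (IAp s ts)
  then have "set (map (ieval opL \<rho>) ts) \<subseteq> Lc" by auto
  then show ?case using assms(1) IAp unfolding is_algebra_def by auto
qed

lemma transfer:
  assumes V: "in_V_Omega Lc opL" and al: "\<forall>i. \<alpha> i \<in> Lc" and ws: "iwf s" and wt: "iwf t"
    and eq: "\<forall>u. ieval omega u s = ieval omega u t"
  shows "ieval opL \<alpha> s = ieval opL \<alpha> t"
proof -
  define W where "W = ivars s \<union> ivars t"
  have "finite W" unfolding W_def by (simp add: finite_ivars)
  then obtain c :: "_ \<Rightarrow> nat" and n where inj: "inj_on c W" using finite_imp_inj_to_nat_seg by blast
  define e where "e = inv_into W c"
  have ec: "\<forall>i\<in>W. e (c i) = i" unfolding e_def using inj by simp
  have "\<forall>\<rho>. eval_trm omega \<rho> (tr c s) = eval_trm omega \<rho> (tr c t)"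
    by (simp add: eval_tr eq)
  moreover have "range (\<alpha> \<circ> e) \<subseteq> Lc" using al by auto
  ultimately have "eval_trm opL (\<alpha> \<circ> e) (tr c s) = eval_trm opL (\<alpha> \<circ> e) (tr c t)"
    using V wf_tr[OF ws] wf_tr[OF wt] unfolding in_V_Omega_def by blast
  hence "ieval opL (\<alpha> \<circ> e \<circ> c) s = ieval opL (\<alpha> \<circ> e \<circ> c) t" by (simp add: eval_tr comp_assoc)
  moreover have "ieval opL (\<alpha> \<circ> e \<circ> c) s = ieval opL \<alpha> s"
    by (rule ieval_cong) (use ec in \<open>auto simp: W_def\<close>)
  moreover have "ieval opL (\<alpha> \<circ> e \<circ> c) t = ieval opL \<alpha> t"
    by (rule ieval_cong) (use ec in \<open>auto simp: W_def\<close>)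
  ultimately show ?thesis by simp
qed

definition dep :: "'i set \<Rightarrow> (('i \<Rightarrow> 'a) \<Rightarrow> 'b) \<Rightarrow> bool" where
  "dep S h \<longleftrightarrow> (\<forall>u v. (\<forall>i\<in>S. u i = v i) \<longrightarrow> h u = h v)"

lemma fibers_partition: "partition_on UNIV (fibers h)"
  unfolding partition_on_def disjoint_def fibers_def by auto

lemma coarser_fibers: fixes h :: "('i \<Rightarrow> 'a) \<Rightarrow> 'b" shows "coarser (fibers h) (Pfin S) \<longleftrightarrow> dep S h"
proof
  assume c: "coarser (fibers h) (Pfin S)"
  show "dep S h" unfolding dep_def
  proof (intro allI impI)
    fix u v :: "'i \<Rightarrow> 'a" assume a: "\<forall>i\<in>S. u i = v i"
    have "{w. \<forall>i\<in>S. w i = u i} \<in> Pfin S" unfolding Pfin_def by auto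
    then obtain C where "C \<in> fibers h" "{w. \<forall>i\<in>S. w i = u i} \<subseteq> C" using c unfolding coarser_def by blast
    then obtain y where "{w. \<forall>i\<in>S. w i = u i} \<subseteq> h -` {y}" unfolding fibers_def by auto
    moreover have "u \<in> {w. \<forall>i\<in>S. w i = u i}" "v \<in> {w. \<forall>i\<in>S. w i = u i}" using a by auto
    ultimately show "h u = h v" by auto
  qed
next
  assume d: "dep S h"
  show "coarser (fibers h) (Pfin S)" unfolding coarser_def
  proof
    fix B :: "('i \<Rightarrow> 'a) set" assume "B \<in> Pfin S"
    then obtain u where B: "B = {w. \<forall>i\<in>S. w i = u i}" unfolding Pfin_def by auto
    have "h -` {h u} \<in> fibers h" unfolding fibers_def by auto
    moreover have "B \<subseteq> h -` {h u}" using d unfolding B dep_def by auto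
    ultimately show "\<exists>C\<in>fibers h. B \<subseteq> C" by blast
  qed
qed

lemma fibers_Pset: "fibers h \<in> Pset \<longleftrightarrow> (\<exists>S. finite S \<and> dep S h)"
  unfolding Pset_def using fibers_partition coarser_fibers by blast

lemma Fset_iff: "h \<in> Fset \<longleftrightarrow> (\<exists>S. finite S \<and> dep S h)"
  unfolding Fset_def using fibers_Pset by blast

lemma Bool_alg_iff: fixes R :: "('i \<Rightarrow> 'a) set" shows "R \<in> Bool_alg \<longleftrightarrow> (\<exists>S. finite S \<and> dep S (\<lambda>u. u \<in> R))"
proof
  assume "R \<in> Bool_alg"
  then consider "R = {}" | P S where "R \<in> P" "partition_on UNIV P" "finite S" "coarser P (Pfin S)"
    unfolding Bool_alg_def Pset_def by auto
  then show "\<exists>S. finite S \<and> dep S (\<lambda>u. u \<in> R)"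
  proof cases
    case 1 then show ?thesis by (auto simp: dep_def)
  next
    case 2
    have imp: "v \<in> R" if a: "\<forall>i\<in>S. u i = v i" "u \<in> R" for u v
    proof -
      have "{w. \<forall>i\<in>S. w i = u i} \<in> Pfin S" unfolding Pfin_def by auto
      then obtain C where C: "C \<in> P" "{w. \<forall>i\<in>S. w i = u i} \<subseteq> C" using 2 unfolding coarser_def by blast
      have "u \<in> C" "v \<in> C" using a C by auto
      have "C = R"
      proof (rule ccontr)
        assume "C \<noteq> R"
        hence "C \<inter> R = {}" using 2 C unfolding partition_on_def disjoint_def by blast
        thus False using \<open>u \<in> C\<close> a by auto
      qed
      thus ?thesis using \<open>v \<in> C\<close> by simp
    qed
    have "dep S (\<lambda>u. u \<in> R)" unfolding dep_def
    proof (intro allI impI)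
      fix u v :: "'i \<Rightarrow> 'a" assume a: "\<forall>i\<in>S. u i = v i"
      hence b: "\<forall>i\<in>S. v i = u i" by auto
      show "(u \<in> R) = (v \<in> R)" using imp[OF a] imp[OF b] by blast
    qed
    thus ?thesis using 2 by blast
  qed
next
  assume "\<exists>S. finite S \<and> dep S (\<lambda>u. u \<in> R)"
  hence F: "fibers (\<lambda>u. u \<in> R) \<in> Pset" using fibers_Pset by blast
  show "R \<in> Bool_alg"
  proof (cases "R = {}")
    case True then show ?thesis by (simp add: Bool_alg_def)
  next
    case False
    hence "R \<in> fibers (\<lambda>u. u \<in> R)" unfolding fibers_def by auto
    thus ?thesis using F unfolding Bool_alg_def by auto
  qed
qed

lemma ieval_Fset: "(\<lambda>u. ieval omega u t) \<in> Fset"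
proof -
  have "dep (ivars t) (\<lambda>u. ieval omega u t)"
    unfolding dep_def by (auto intro!: ieval_cong)
  thus ?thesis using Fset_iff finite_ivars by blast
qed

lemma Fop_term: "Fop s (map (\<lambda>t u. ieval omega u t) ts) = (\<lambda>u. ieval omega u (IAp s ts))"
  unfolding Fop_def by (simp add: comp_def)

lemma proj_term: "proj i = (\<lambda>u. ieval omega u (IVar i))"
  unfolding proj_def by simp

lemma Fop_Op: "Fop (Op n H) gs = (\<lambda>u. H (map (\<lambda>g. g u) gs))"
  unfolding Fop_def by simp

lemma Fset_rep:
  fixes h :: "('i \<Rightarrow> 'a) \<Rightarrow> 'a"
  assumes "h \<in> Fset"
  shows "\<exists>s ix. valid_sym s \<and> length ix = arity s \<and> h = Fop s (map proj ix)"
proof -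
  obtain S where S: "finite S" "dep S h" using assms Fset_iff by blast
  obtain ix where ix: "set ix = insert undefined S" using finite_list S(1) by blast
  define H where "H = (\<lambda>xs. h (\<lambda>i. case map_of (zip ix xs) i of Some a \<Rightarrow> a | None \<Rightarrow> undefined))"
  have len: "length ix \<ge> 1" using ix by (cases ix) auto
  have "h = Fop (Op (length ix) H) (map proj ix)"
  proof
    fix u
    have "Fop (Op (length ix) H) (map proj ix) u = H (map u ix)" unfolding Fop_Op by (simp add: comp_def proj_def)
    also have "\<dots> = h (\<lambda>i. if i \<in> set ix then u i else undefined)" unfolding H_def map_of_zip_map by (intro arg_cong[where f=h] ext) simp
    also have "\<dots> = h u" by (rule S(2)[unfolded dep_def, rule_format]) (simp add: ix)
    finally show "h u = Fop (Op (length ix) H) (map proj ix) u" by simp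
  qed
  thus ?thesis using len by (intro exI[of _ "Op (length ix) H"] exI[of _ ix]) simp
qed

lemma rep_term: "Fop s (map proj ix) = (\<lambda>u. ieval omega u (IAp s (map IVar ix)))"
proof -
  have "map proj ix = map (\<lambda>t u. ieval omega u t) (map IVar ix)" by (simp add: proj_def comp_def)
  show ?thesis by (simp only: \<open>map proj ix = _\<close> Fop_term)
qed

lemma Fset_term:
  fixes h :: "('i \<Rightarrow> 'a) \<Rightarrow> 'a"
  assumes "h \<in> Fset"
  shows "\<exists>t. iwf t \<and> h = (\<lambda>u. ieval omega u t)"
proof -
  obtain s ix where r: "valid_sym s" "length ix = arity s" "h = Fop s (map proj ix)"
    using Fset_rep[OF assms] by (elim exE conjE)
  have "iwf (IAp s (map IVar ix))" using r by simp
  moreover have "h = (\<lambda>u. ieval omega u (IAp s (map IVar ix)))" using r(3) rep_term by simp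
  ultimately show ?thesis by (intro exI[of _ "IAp s (map IVar ix)"] conjI)
qed

lemma Fset_terms:
  fixes gs :: "(('i \<Rightarrow> 'a) \<Rightarrow> 'a) list"
  shows "set gs \<subseteq> Fset \<Longrightarrow> \<exists>ts. (\<forall>t\<in>set ts. iwf t) \<and> gs = map (\<lambda>t u. ieval omega u t) ts"
proof (induct gs)
  case Nil then show ?case by simp
next
  case (Cons g gs)
  have "set gs \<subseteq> Fset" "g \<in> Fset" using Cons(2) by auto
  obtain ts where ts: "\<forall>t\<in>set ts. iwf t" "gs = map (\<lambda>t u. ieval omega u t) ts" using Cons(1)[OF \<open>set gs \<subseteq> Fset\<close>] by (elim exE conjE)
  obtain t where t: "iwf t" "g = (\<lambda>u. ieval omega u t)" using Fset_term[OF \<open>g \<in> Fset\<close>] by (elim exE conjE)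
  have "\<forall>t\<in>set (t # ts). iwf t" using t ts by simp
  moreover have "g # gs = map (\<lambda>t u. ieval omega u t) (t # ts)" using t(2) ts(2) by simp
  ultimately show ?case by (intro exI[of _ "t # ts"] conjI)
qed


lemma Fop_Fset:
  fixes gs :: "(('i \<Rightarrow> 'a) \<Rightarrow> 'a) list"
  assumes "set gs \<subseteq> Fset" shows "Fop s gs \<in> Fset"
proof -
  obtain ts where "gs = map (\<lambda>t u. ieval omega u t) ts" using Fset_terms assms by blast
  thus ?thesis by (simp only: Fop_term ieval_Fset)
qed

lemma hom_eval:
  fixes \<psi> :: "(('i \<Rightarrow> 'a) \<Rightarrow> 'a) \<Rightarrow> 'l"
  assumes h: "is_hom_F Lc opL \<psi>" and p: "\<forall>i. \<psi> (proj i) = \<alpha> i"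
  shows "iwf t \<Longrightarrow> \<psi> (\<lambda>u. ieval omega u t) = ieval opL \<alpha> t"
proof (induct t)
  case (IVar i) then show ?case using p by (simp add: proj_def)
next
  case (IAp s ts)
  define gs where "gs = map (\<lambda>t u. ieval omega u t) ts"
  have sub: "set gs \<subseteq> Fset" unfolding gs_def using ieval_Fset by auto
  have "\<psi> (\<lambda>u. ieval omega u (IAp s ts)) = \<psi> (Fop s gs)" unfolding gs_def Fop_term ..
  also have "\<dots> = opL s (map \<psi> gs)"
  proof -
    have "valid_sym s \<and> length gs = arity s \<and> set gs \<subseteq> Fset" using sub IAp(2) unfolding gs_def by simp
    thus ?thesis using h unfolding is_hom_F_def by blast
  qed
  also have "map \<psi> gs = map (ieval opL \<alpha>) ts" unfolding gs_def map_map comp_def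
    by (rule map_cong[OF refl]) (use IAp in simp)
  finally show ?case by simp
qed

lemma hom_unique:
  fixes \<psi>1 \<psi>2 :: "(('i \<Rightarrow> 'a) \<Rightarrow> 'a) \<Rightarrow> 'l"
  assumes "is_hom_F Lc opL \<psi>1" "\<forall>i. \<psi>1 (proj i) = \<alpha> i"
    "is_hom_F Lc opL \<psi>2" "\<forall>i. \<psi>2 (proj i) = \<alpha> i" "g \<in> Fset"
  shows "\<psi>1 g = \<psi>2 g"
proof -
  obtain t where t: "iwf t" "g = (\<lambda>u. ieval omega u t)" using Fset_term[OF assms(5)] by blast
  show ?thesis unfolding t(2) using hom_eval[OF assms(1,2) t(1)] hom_eval[OF assms(3,4) t(1)] by simp
qed

lemma hom_exists:
  assumes V: "in_V_Omega Lc opL" and al: "\<forall>i. \<alpha> i \<in> Lc"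
  shows "\<exists>\<phi> :: (('i \<Rightarrow> 'a) \<Rightarrow> 'a) \<Rightarrow> 'l. is_hom_F Lc opL \<phi> \<and> (\<forall>i. \<phi> (proj i) = \<alpha> i) \<and> \<phi> \<in> extensional Fset"
proof -
  have alg: "is_algebra Lc opL" using V unfolding in_V_Omega_def by blast
  define T where "T = (\<lambda>g::('i \<Rightarrow> 'a) \<Rightarrow> 'a. SOME t. iwf t \<and> g = (\<lambda>u. ieval omega u t))"
  define \<phi> where "\<phi> = (\<lambda>g. if g \<in> Fset then ieval opL \<alpha> (T g) else undefined)"
  have T: "iwf (T g) \<and> g = (\<lambda>u. ieval omega u (T g))" if "g \<in> Fset" for g
    unfolding T_def using someI_ex[OF Fset_term[OF that]] .
  have key: "\<phi> (\<lambda>u. ieval omega u t) = ieval opL \<alpha> t" if "iwf t" for t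
  proof -
    let ?g = "\<lambda>u. ieval omega u t"
    have g: "?g \<in> Fset" by (rule ieval_Fset)
    have "\<forall>u. ieval omega u (T ?g) = ieval omega u t"
    proof
      fix u
      show "ieval omega u (T ?g) = ieval omega u t" by (rule sym, rule fun_cong[OF conjunct2[OF T[OF g]]])
    qed
    hence "ieval opL \<alpha> (T ?g) = ieval opL \<alpha> t" using transfer[OF V al conjunct1[OF T[OF g]] that] by simp
    thus ?thesis unfolding \<phi>_def using g by simp
  qed
  have "is_hom_F Lc opL \<phi>" unfolding is_hom_F_def
  proof (intro conjI ballI allI impI)
    fix g :: "('i \<Rightarrow> 'a) \<Rightarrow> 'a" assume "g \<in> Fset"
    thus "\<phi> g \<in> Lc" unfolding \<phi>_def using ieval_in[OF alg al] T[THEN conjunct1] by simp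
  next
    fix s :: "'a sym" and gs :: "(('i \<Rightarrow> 'a) \<Rightarrow> 'a) list"
    assume a: "valid_sym s \<and> length gs = arity s \<and> set gs \<subseteq> Fset"
    have "map (\<lambda>g u. ieval omega u (T g)) gs = gs"
    proof (rule map_idI)
      fix x assume "x \<in> set gs"
      hence "x \<in> Fset" using a by auto
      hence e: "x = (\<lambda>u. ieval omega u (T x))" by (rule conjunct2[OF T])
      show "(\<lambda>g u. ieval omega u (T g)) x = x" using e[symmetric] by simp
    qed
    hence gs: "gs = map (\<lambda>t u. ieval omega u t) (map T gs)" by (simp add: comp_def)
    have "\<phi> (Fop s gs) = \<phi> (\<lambda>u. ieval omega u (IAp s (map T gs)))"
      by (subst gs) (simp only: Fop_term)
    also have "\<dots> = ieval opL \<alpha> (IAp s (map T gs))"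
    proof (rule key)
      have "\<forall>t\<in>set (map T gs). iwf t" using a T[THEN conjunct1] by auto
      thus "iwf (IAp s (map T gs))" using a by simp
    qed
    also have "\<dots> = opL s (map \<phi> gs)"
    proof -
      have "map (ieval opL \<alpha>) (map T gs) = map \<phi> gs" using a unfolding \<phi>_def by (auto intro!: map_cong)
      thus ?thesis by (simp only: ieval.simps)
    qed
    finally show "\<phi> (Fop s gs) = opL s (map \<phi> gs)" .
  qed
  moreover have "\<forall>i. \<phi> (proj i) = \<alpha> i"
  proof
    fix i show "\<phi> (proj i) = \<alpha> i" unfolding proj_term using key[of "IVar i"] by simp
  qed
  moreover have "\<phi> \<in> extensional Fset" unfolding \<phi>_def extensional_def by auto
  ultimately show ?thesis by blast
qed

lemma phi_props:
  assumes V: "in_V_Omega Lc opL" and al: "\<forall>i. \<alpha> i \<in> Lc"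
  shows "is_hom_F Lc opL (phi Lc opL \<alpha> :: (('i \<Rightarrow> 'a) \<Rightarrow> 'a) \<Rightarrow> 'l) \<and> (\<forall>i. phi Lc opL \<alpha> (proj i) = \<alpha> i)"
proof -
  let ?P = "\<lambda>\<phi> :: (('i \<Rightarrow> 'a) \<Rightarrow> 'a) \<Rightarrow> 'l. is_hom_F Lc opL \<phi> \<and> (\<forall>i. \<phi> (proj i) = \<alpha> i) \<and> \<phi> \<in> extensional Fset"
  have "\<exists>!\<phi>. ?P \<phi>"
  proof (rule ex_ex1I)
    show "\<exists>\<phi>. ?P \<phi>" using hom_exists[OF V al] .
  next
    fix \<phi>1 \<phi>2 assume a: "?P \<phi>1" "?P \<phi>2"
    show "\<phi>1 = \<phi>2"
    proof
      fix g show "\<phi>1 g = \<phi>2 g"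
        using a hom_unique[of Lc opL \<phi>1 \<alpha> \<phi>2 g] unfolding extensional_def by (cases "g \<in> Fset") auto
    qed
  qed
  hence "?P (THE \<phi>. ?P \<phi>)" by (rule theI')
  thus ?thesis unfolding phi_def by blast
qed

lemma hom_Fop_cong:
  assumes "is_hom_F Lc opL \<phi>" "valid_sym s" "length gs = arity s" "length gs' = arity s"
    "set gs \<subseteq> Fset" "set gs' \<subseteq> Fset" "map \<phi> gs = map \<phi> gs'"
  shows "\<phi> (Fop s gs) = \<phi> (Fop s gs')"
proof -
  have "\<phi> (Fop s gs) = opL s (map \<phi> gs)" using assms unfolding is_hom_F_def by blast
  moreover have "\<phi> (Fop s gs') = opL s (map \<phi> gs')" using assms unfolding is_hom_F_def by blast
  ultimately show ?thesis using assms(7) by simp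
qed

lemma dep_mono: "dep S h \<Longrightarrow> S \<subseteq> S' \<Longrightarrow> dep S' h"
  unfolding dep_def by blast

lemma const_Fset: "(\<lambda>u::'i \<Rightarrow> 'a. c) \<in> Fset"
  unfolding Fset_iff dep_def by (intro exI[of _ "{}"]) simp

lemma chi_Fset:
  fixes R :: "('i \<Rightarrow> 'a) set"
  assumes "R \<in> Bool_alg" shows "(\<lambda>u. if u \<in> R then a else b) \<in> Fset"
proof -
  obtain S where "finite S" "dep S (\<lambda>u. u \<in> R)" using assms Bool_alg_iff by blast
  hence "dep S (\<lambda>u. if u \<in> R then a else b)" unfolding dep_def
  proof (intro allI impI)
    fix u v :: "'i \<Rightarrow> 'a" assume d: "\<forall>u v. (\<forall>i\<in>S. u i = v i) \<longrightarrow> (u \<in> R) = (v \<in> R)" and "\<forall>i\<in>S. u i = v i"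
    hence "(u \<in> R) = (v \<in> R)" by blast
    thus "(if u \<in> R then a else b) = (if v \<in> R then a else b)" by simp
  qed
  thus ?thesis using \<open>finite S\<close> Fset_iff by blast
qed

lemma eq_Bool:
  fixes l m :: "('i \<Rightarrow> 'a) \<Rightarrow> 'a"
  assumes "l \<in> Fset" "m \<in> Fset" shows "{u. l u = m u} \<in> Bool_alg"
proof -
  obtain S1 where "finite S1" and d1: "dep S1 l" using assms(1) Fset_iff by blast
  obtain S2 where "finite S2" and d2: "dep S2 m" using assms(2) Fset_iff by blast
  have "dep (S1 \<union> S2) l" "dep (S1 \<union> S2) m" using dep_mono[OF d1] dep_mono[OF d2] by auto
  hence "dep (S1 \<union> S2) (\<lambda>u. u \<in> {u. l u = m u})" unfolding dep_def
  proof (intro allI impI)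
    fix u v :: "'i \<Rightarrow> 'a" assume d1: "\<forall>u v. (\<forall>i\<in>S1 \<union> S2. u i = v i) \<longrightarrow> l u = l v"
      and d2: "\<forall>u v. (\<forall>i\<in>S1 \<union> S2. u i = v i) \<longrightarrow> m u = m v" and a: "\<forall>i\<in>S1 \<union> S2. u i = v i"
    have "l u = l v" "m u = m v" using d1 d2 a by blast+
    thus "(u \<in> {u. l u = m u}) = (v \<in> {u. l u = m u})" by simp
  qed
  thus ?thesis unfolding Bool_alg_iff using \<open>finite S1\<close> \<open>finite S2\<close> by (intro exI[of _ "S1 \<union> S2"]) simp
qed

lemma int_Bool:
  fixes R S :: "('i \<Rightarrow> 'a) set"
  assumes "R \<in> Bool_alg" "S \<in> Bool_alg" shows "R \<inter> S \<in> Bool_alg"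
proof -
  obtain S1 where "finite S1" and d1: "dep S1 (\<lambda>u. u \<in> R)" using assms(1) Bool_alg_iff by blast
  obtain S2 where "finite S2" and d2: "dep S2 (\<lambda>u. u \<in> S)" using assms(2) Bool_alg_iff by blast
  have "dep (S1 \<union> S2) (\<lambda>u. u \<in> R)" "dep (S1 \<union> S2) (\<lambda>u. u \<in> S)" using dep_mono[OF d1] dep_mono[OF d2] by auto
  hence "dep (S1 \<union> S2) (\<lambda>u. u \<in> R \<inter> S)" unfolding dep_def
  proof (intro allI impI)
    fix u v :: "'i \<Rightarrow> 'a" assume d1: "\<forall>u v. (\<forall>i\<in>S1 \<union> S2. u i = v i) \<longrightarrow> (u \<in> R) = (v \<in> R)"
      and d2: "\<forall>u v. (\<forall>i\<in>S1 \<union> S2. u i = v i) \<longrightarrow> (u \<in> S) = (v \<in> S)" and a: "\<forall>i\<in>S1 \<union> S2. u i = v i"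
    have "(u \<in> R) = (v \<in> R)" "(u \<in> S) = (v \<in> S)" using d1 d2 a by blast+
    thus "(u \<in> R \<inter> S) = (v \<in> R \<inter> S)" by simp
  qed
  thus ?thesis unfolding Bool_alg_iff using \<open>finite S1\<close> \<open>finite S2\<close> by (intro exI[of _ "S1 \<union> S2"]) simp
qed

lemma UNIV_Bool: "(UNIV :: ('i \<Rightarrow> 'a) set) \<in> Bool_alg"
  unfolding Bool_alg_iff dep_def by (intro exI[of _ "{}"]) simp

lemma Zf_prop:
  fixes \<alpha> :: "'i \<Rightarrow> 'l" and opL :: "'a sym \<Rightarrow> 'l list \<Rightarrow> 'l"
  assumes V: "in_V_Omega Lc opL" and al: "\<forall>i. \<alpha> i \<in> Lc" and ab: "a \<noteq> (b::'a)"
  shows "\<forall>l\<in>(Fset :: (('i \<Rightarrow> 'a) \<Rightarrow> 'a) set). \<forall>m\<in>Fset.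
           phi Lc opL \<alpha> l = phi Lc opL \<alpha> m \<longleftrightarrow> {u. l u = m u} \<in> Zf Lc opL \<alpha>"
proof -
  define \<phi> where "\<phi> = (phi Lc opL \<alpha> :: (('i \<Rightarrow> 'a) \<Rightarrow> 'a) \<Rightarrow> 'l)"
  have hom: "is_hom_F Lc opL \<phi>" using phi_props[OF V al] unfolding \<phi>_def by blast
  define \<chi> where "\<chi> = (\<lambda>(R::('i \<Rightarrow> 'a) set) u. if u \<in> R then a else b)"
  define ca where "ca = (\<lambda>u::'i \<Rightarrow> 'a. a)"
  have chieq: "{u. \<chi> R u = ca u} = R" for R unfolding \<chi>_def ca_def using ab by auto
  have chiF: "R \<in> Bool_alg \<Longrightarrow> \<chi> R \<in> Fset" for R unfolding \<chi>_def by (rule chi_Fset)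
  have caF: "ca \<in> Fset" unfolding ca_def by (rule const_Fset)
  let ?Q = "\<lambda>Z. is_filter_on Bool_alg Z \<and> (\<forall>l\<in>Fset. \<forall>m\<in>Fset. \<phi> l = \<phi> m \<longleftrightarrow> {u. l u = m u} \<in> Z)"
  have memZ: "R \<in> Z \<longleftrightarrow> R \<in> Bool_alg \<and> \<phi> (\<chi> R) = \<phi> ca" if "?Q Z" for Z R
  proof -
    have q1: "Z \<subseteq> Bool_alg" using that[THEN conjunct1] unfolding is_filter_on_def by (elim conjE)
    have q2: "\<forall>l\<in>Fset. \<forall>m\<in>Fset. \<phi> l = \<phi> m \<longleftrightarrow> {u. l u = m u} \<in> Z" using that by (rule conjunct2)
    have key: "\<phi> (\<chi> R) = \<phi> ca \<longleftrightarrow> R \<in> Z" if RB: "R \<in> Bool_alg"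
    proof -
      have "\<phi> (\<chi> R) = \<phi> ca \<longleftrightarrow> {u. \<chi> R u = ca u} \<in> Z" using q2 chiF[OF RB] caF by (simp only: Ball_def)
      thus ?thesis by (simp only: chieq)
    qed
    show ?thesis using q1 key by blast
  qed
  define Z0 where "Z0 = {R \<in> Bool_alg. \<phi> (\<chi> R) = \<phi> ca}"
  define op_and where "op_and = Op 2 (\<lambda>xs. if xs!0 = a \<and> xs!1 = a then a else b)"
  define op_or where "op_or = Op 2 (\<lambda>xs. if xs!0 = a then a else xs!1)"
  define op_eq where "op_eq = Op 2 (\<lambda>xs. if xs!0 = xs!1 then a else b)"
  define op_d where "op_d = Op 3 (\<lambda>xs. if xs!2 = a then xs!0 else xs!1)"
  have Q0: "?Q Z0"
  proof (intro conjI)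
    show "is_filter_on Bool_alg Z0" unfolding is_filter_on_def
    proof (intro conjI ballI impI)
      show "Z0 \<subseteq> Bool_alg" unfolding Z0_def by blast
      have "\<chi> UNIV = ca" unfolding \<chi>_def ca_def by simp
      thus "UNIV \<in> Z0" unfolding Z0_def using UNIV_Bool by simp
    next
      fix R S assume R: "R \<in> Z0" and S: "S \<in> Z0"
      have RB: "R \<in> Bool_alg" "\<phi> (\<chi> R) = \<phi> ca" and SB: "S \<in> Bool_alg" "\<phi> (\<chi> S) = \<phi> ca"
        using R S unfolding Z0_def by auto
      have e1: "\<chi> (R \<inter> S) = Fop op_and [\<chi> R, \<chi> S]" unfolding \<chi>_def op_and_def Fop_Op by (auto simp: ab)
      have e2: "Fop op_and [ca, ca] = ca" unfolding ca_def op_and_def Fop_Op by simp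
      have "\<phi> (Fop op_and [\<chi> R, \<chi> S]) = \<phi> (Fop op_and [ca, ca])"
        by (rule hom_Fop_cong[OF hom]) (use RB SB chiF caF in \<open>auto simp: op_and_def\<close>)
      hence "\<phi> (\<chi> (R \<inter> S)) = \<phi> ca" using e1 e2 by simp
      thus "R \<inter> S \<in> Z0" unfolding Z0_def using int_Bool RB SB by blast
    next
      fix R S assume R: "R \<in> Z0" and S: "S \<in> Bool_alg" and sub: "R \<subseteq> S"
      have RB: "R \<in> Bool_alg" "\<phi> (\<chi> R) = \<phi> ca" using R unfolding Z0_def by auto
      have e1: "\<chi> S = Fop op_or [\<chi> R, \<chi> S]" unfolding \<chi>_def op_or_def Fop_Op using sub ab by (auto simp: fun_eq_iff)
      have e2: "Fop op_or [ca, \<chi> S] = ca" unfolding ca_def op_or_def Fop_Op by simp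
      have "\<phi> (Fop op_or [\<chi> R, \<chi> S]) = \<phi> (Fop op_or [ca, \<chi> S])"
        by (rule hom_Fop_cong[OF hom]) (use RB S chiF caF in \<open>auto simp: op_or_def\<close>)
      hence "\<phi> (\<chi> S) = \<phi> ca" using e1[symmetric] e2 by simp
      thus "S \<in> Z0" unfolding Z0_def using S by blast
    qed
  next
    show "\<forall>l\<in>Fset. \<forall>m\<in>Fset. \<phi> l = \<phi> m \<longleftrightarrow> {u. l u = m u} \<in> Z0"
    proof (intro ballI)
      fix l m :: "('i \<Rightarrow> 'a) \<Rightarrow> 'a" assume l: "l \<in> Fset" and m: "m \<in> Fset"
      define E where "E = {u. l u = m u}"
      have EB: "E \<in> Bool_alg" unfolding E_def using eq_Bool l m by blast
      have chiE: "\<chi> E \<in> Fset" using chiF EB by blast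
      show "\<phi> l = \<phi> m \<longleftrightarrow> {u. l u = m u} \<in> Z0"
      proof
        assume eq: "\<phi> l = \<phi> m"
        have e1: "\<chi> E = Fop op_eq [l, m]" unfolding \<chi>_def op_eq_def Fop_Op E_def by auto
        have e2: "Fop op_eq [l, l] = ca" unfolding ca_def op_eq_def Fop_Op by simp
        have "\<phi> (Fop op_eq [l, m]) = \<phi> (Fop op_eq [l, l])"
          by (rule hom_Fop_cong[OF hom]) (use l m eq in \<open>auto simp: op_eq_def\<close>)
        hence "\<phi> (\<chi> E) = \<phi> ca" using e1 e2 by simp
        thus "{u. l u = m u} \<in> Z0" unfolding Z0_def using EB E_def by blast
      next
        assume "{u. l u = m u} \<in> Z0"
        hence eq: "\<phi> (\<chi> E) = \<phi> ca" unfolding Z0_def E_def by blast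
        have e1: "m = Fop op_d [l, m, \<chi> E]" unfolding \<chi>_def op_d_def Fop_Op E_def using ab by (auto simp: fun_eq_iff)
        have e2: "Fop op_d [l, m, ca] = l" unfolding ca_def op_d_def Fop_Op by simp
        have "\<phi> (Fop op_d [l, m, \<chi> E]) = \<phi> (Fop op_d [l, m, ca])"
          by (rule hom_Fop_cong[OF hom]) (use l m eq chiE caF in \<open>auto simp: op_d_def numeral_eq_Suc\<close>)
        thus "\<phi> l = \<phi> m" using e1[symmetric] e2 by simp
      qed
    qed
  qed
  have "\<exists>!Z. ?Q Z"
  proof (rule ex_ex1I)
    show "\<exists>Z. ?Q Z" using Q0 by blast
  next
    fix Z1 Z2 assume q1: "?Q Z1" and q2: "?Q Z2"
    show "Z1 = Z2"
    proof (rule set_eqI)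
      fix x show "x \<in> Z1 \<longleftrightarrow> x \<in> Z2" using memZ[OF q1, of x] memZ[OF q2, of x] by (simp only:)
    qed
  qed
  hence "?Q (THE Z. ?Q Z)" by (rule theI')
  thus ?thesis unfolding Zf_def \<phi>_def by blast
qed

lemma preimg_fibers: "preimg_part f (fibers g) = fibers (g \<circ> f)"
proof
  show "preimg_part f (fibers g) \<subseteq> fibers (g \<circ> f)"
  proof
    fix X assume "X \<in> preimg_part f (fibers g)"
    then obtain y where X: "X = f -` (g -` {y})" "X \<noteq> {}" unfolding preimg_part_def fibers_def by auto
    then obtain x where "x \<in> X" by blast
    hence "y = (g \<circ> f) x" using X by auto
    thus "X \<in> fibers (g \<circ> f)" unfolding fibers_def using X by (auto simp: vimage_comp)
  qed
next
  show "fibers (g \<circ> f) \<subseteq> preimg_part f (fibers g)"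
  proof
    fix X assume "X \<in> fibers (g \<circ> f)"
    then obtain x where X: "X = (g \<circ> f) -` {(g \<circ> f) x}" unfolding fibers_def by auto
    have "X = f -` (g -` {g (f x)})" using X by auto
    moreover have "g -` {g (f x)} \<in> fibers g" unfolding fibers_def by auto
    moreover have "X \<noteq> {}" using X by auto
    ultimately show "X \<in> preimg_part f (fibers g)" unfolding preimg_part_def by blast
  qed
qed

lemma fstar_Fset:
  fixes f :: "('i \<Rightarrow> 'a) \<Rightarrow> ('j \<Rightarrow> 'a)" and g :: "('j \<Rightarrow> 'a) \<Rightarrow> 'a"
  assumes "unif_cont f" "g \<in> Fset" shows "g \<circ> f \<in> Fset"
proof -
  have "fibers g \<in> Pset" using assms(2) unfolding Fset_def by simp
  hence "preimg_part f (fibers g) \<in> Pset" using assms(1) unfolding unif_cont_def by blast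
  thus ?thesis unfolding Fset_def preimg_fibers by simp
qed

theorem mainTheorem7:
  fixes Lc :: "'l set" and opL :: "'a sym \<Rightarrow> 'l list \<Rightarrow> 'l"
    and f :: "('i \<Rightarrow> 'a) \<Rightarrow> ('j \<Rightarrow> 'a)"
    and \<alpha> :: "'i \<Rightarrow> 'l" and \<beta> :: "'j \<Rightarrow> 'l"
  assumes "infinite (UNIV :: 'a set)"
    and "in_V_Omega Lc opL"
    and "unif_cont f"
    and "\<forall>i. \<alpha> i \<in> Lc"
    and "\<forall>j. \<beta> j \<in> Lc"
    and "\<beta> = fbar opL f \<alpha>"
  shows "(\<forall>g\<in>(Fset :: (('j \<Rightarrow> 'a) \<Rightarrow> 'a) set). phi Lc opL \<beta> g = phi Lc opL \<alpha> (fstar f g))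
       \<and> (\<forall>R\<in>(Bool_alg :: ('j \<Rightarrow> 'a) set set). R \<in> Zf Lc opL \<beta> \<longleftrightarrow> f -` R \<in> Zf Lc opL \<alpha>)"
proof -
  note V = assms(2) and uc = assms(3) and al = assms(4) and be = assms(5)
  obtain a b :: 'a where ab: "a \<noteq> b"
  proof -
    have "\<exists>a b::'a. a \<noteq> b"
    proof (rule ccontr)
      assume "\<not> (\<exists>a b::'a. a \<noteq> b)"
      hence "(UNIV :: 'a set) = {undefined}" by auto
      thus False using assms(1) by (metis finite.emptyI finite.insertI)
    qed
    thus ?thesis using that by blast
  qed
  define \<phi>a where "\<phi>a = (phi Lc opL \<alpha> :: (('i \<Rightarrow> 'a) \<Rightarrow> 'a) \<Rightarrow> 'l)"
  define \<phi>b where "\<phi>b = (phi Lc opL \<beta> :: (('j \<Rightarrow> 'a) \<Rightarrow> 'a) \<Rightarrow> 'l)"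
  have homa: "is_hom_F Lc opL \<phi>a" and pa: "\<forall>i. \<phi>a (proj i) = \<alpha> i"
    using phi_props[OF V al] unfolding \<phi>a_def by blast+
  have homb: "is_hom_F Lc opL \<phi>b" and pb: "\<forall>j. \<phi>b (proj j) = \<beta> j"
    using phi_props[OF V be] unfolding \<phi>b_def by blast+
  define \<psi> where "\<psi> = (\<lambda>g::('j \<Rightarrow> 'a) \<Rightarrow> 'a. \<phi>a (g \<circ> f))"
  have homp: "is_hom_F Lc opL \<psi>" unfolding is_hom_F_def
  proof (intro conjI ballI allI impI)
    fix g :: "('j \<Rightarrow> 'a) \<Rightarrow> 'a" assume "g \<in> Fset"
    hence "g \<circ> f \<in> Fset" using fstar_Fset[OF uc] by blast
    thus "\<psi> g \<in> Lc" using homa unfolding is_hom_F_def \<psi>_def by blast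
  next
    fix s :: "'a sym" and gs :: "(('j \<Rightarrow> 'a) \<Rightarrow> 'a) list"
    assume a: "valid_sym s \<and> length gs = arity s \<and> set gs \<subseteq> Fset"
    have e: "Fop s gs \<circ> f = Fop s (map (\<lambda>g. g \<circ> f) gs)" unfolding Fop_def by (simp add: comp_def)
    have sub: "set (map (\<lambda>g. g \<circ> f) gs) \<subseteq> Fset" using a fstar_Fset[OF uc] by auto
    have "\<psi> (Fop s gs) = \<phi>a (Fop s (map (\<lambda>g. g \<circ> f) gs))" unfolding \<psi>_def e ..
    also have "\<dots> = opL s (map \<phi>a (map (\<lambda>g. g \<circ> f) gs))" using homa a sub unfolding is_hom_F_def by simp
    also have "\<dots> = opL s (map \<psi> gs)" unfolding \<psi>_def by (simp add: comp_def)
    finally show "\<psi> (Fop s gs) = opL s (map \<psi> gs)" .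
  qed
  have pp: "\<forall>j. \<psi> (proj j) = \<beta> j"
  proof
    fix j
    define fj where "fj = (\<lambda>u. f u j)"
    have pj: "proj j \<circ> f = fj" unfolding fj_def proj_def by (simp add: comp_def)
    have "proj j \<in> Fset" unfolding proj_term by (rule ieval_Fset)
    hence fjF: "fj \<in> Fset" using fstar_Fset[OF uc] pj by metis
    have bj: "\<beta> j = hbar opL fj \<alpha>" unfolding assms(6) fbar_def fj_def ..
    let ?P = "\<lambda>v. \<exists>s ix. valid_sym s \<and> length ix = arity s \<and> fj = Fop s (map proj ix) \<and> v = opL s (map \<alpha> ix)"
    obtain s ix where r: "valid_sym s" "length ix = arity s" "fj = Fop s (map proj ix)"
      using Fset_rep[OF fjF] by (elim exE conjE)
    have "\<exists>v. ?P v" using r by blast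
    hence "?P (hbar opL fj \<alpha>)" unfolding hbar_def by (rule someI_ex)
    then obtain s' ix' where r': "valid_sym s'" "length ix' = arity s'" "fj = Fop s' (map proj ix')"
      "hbar opL fj \<alpha> = opL s' (map \<alpha> ix')" by (elim exE conjE)
    have w: "iwf (IAp s' (map IVar ix'))" using r' by simp
    have "\<phi>a fj = ieval opL \<alpha> (IAp s' (map IVar ix'))"
      unfolding r'(3) rep_term by (rule hom_eval[OF homa pa w])
    also have "\<dots> = opL s' (map \<alpha> ix')" by (simp add: comp_def)
    finally show "\<psi> (proj j) = \<beta> j" unfolding \<psi>_def pj bj r'(4) .
  qed
  have part1: "\<forall>g\<in>(Fset :: (('j \<Rightarrow> 'a) \<Rightarrow> 'a) set). \<phi>b g = \<phi>a (g \<circ> f)"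
  proof
    fix g :: "('j \<Rightarrow> 'a) \<Rightarrow> 'a" assume "g \<in> Fset"
    from hom_unique[OF homb pb homp pp this] show "\<phi>b g = \<phi>a (g \<circ> f)" unfolding \<psi>_def .
  qed
  have part2: "R \<in> Zf Lc opL \<beta> \<longleftrightarrow> f -` R \<in> Zf Lc opL \<alpha>" if RB: "R \<in> Bool_alg" for R :: "('j \<Rightarrow> 'a) set"
  proof -
    define \<chi> where "\<chi> = (\<lambda>u. if u \<in> R then a else b)"
    define ca where "ca = (\<lambda>u::'j \<Rightarrow> 'a. a)"
    have chiF: "\<chi> \<in> Fset" unfolding \<chi>_def using chi_Fset[OF RB] .
    have caF: "ca \<in> Fset" unfolding ca_def by (rule const_Fset)
    have chiF': "\<chi> \<circ> f \<in> Fset" and caF': "ca \<circ> f \<in> Fset" using fstar_Fset[OF uc] chiF caF by blast+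
    have zb: "\<phi>b \<chi> = \<phi>b ca \<longleftrightarrow> {u. \<chi> u = ca u} \<in> Zf Lc opL \<beta>"
      using Zf_prop[OF V be ab] chiF caF unfolding \<phi>b_def by (simp only: Ball_def)
    have za: "\<phi>a (\<chi> \<circ> f) = \<phi>a (ca \<circ> f) \<longleftrightarrow> {u. (\<chi> \<circ> f) u = (ca \<circ> f) u} \<in> Zf Lc opL \<alpha>"
      using Zf_prop[OF V al ab] chiF' caF' unfolding \<phi>a_def by (simp only: Ball_def)
    have s1: "{u. \<chi> u = ca u} = R" unfolding \<chi>_def ca_def using ab by auto
    have s2: "{u. (\<chi> \<circ> f) u = (ca \<circ> f) u} = f -` R" unfolding \<chi>_def ca_def using ab by auto
    have "\<phi>b \<chi> = \<phi>a (\<chi> \<circ> f)" "\<phi>b ca = \<phi>a (ca \<circ> f)" using part1 chiF caF by blast+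
    thus ?thesis using za zb s1 s2 by simp
  qed
  show ?thesis using part1 part2 unfolding \<phi>a_def \<phi>b_def fstar_def by blast
qed

end
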